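(* Consider the Decaying-$\epsilon$-FOCuS procedure (described in the context) on $M>1$ streams with detection threshold $\lambda>0$, where stream 1 has a change-point at $\nu=0$ (so every observation of stream 1 is $\mathcal{N}(\mu_1,1)$ with $\mu_1\ne0$, and all other observations are $\mathcal{N}(0,1)$). Let $t_0$ be the smallest time step such that for all $t>t_0$, $T_t^{(1)}>\max_{m\in[M]\setminus\{1\}}T_t^{(m)}$. Then $t_0$ is $\mathbb{P}_{M,0}$-almost surely finite.
   Context: Setting: there are $M$ independent data streams. At each time $t=1,2,\dots$ an agent selects one stream $A_t\in\{1,\dots,M\}$ and observes one value $X_t\in\mathbb{R}$ from it. The $i$-th observation taken from stream $m$ is denoted $X_i^{(m)}$. Pre-change observations are $\mathcal{N}(0,1)$. Stream 1 has a change-point $\nu$: if $A_t=1$ and $t>\nu$ then $X_t\sim\mathcal{N}(\mu_1,1)$ with $\mu_1\neq0$; otherwise $X_t\sim\mathcal{N}(0,1)$; observations are conditionally independent given the selections. $\mathbb{P}_{M,\nu}$ denotes probability for $M$ streams with change at $\nu$ in stream 1. $\mathcal{F}_t=\sigma(A_1,X_1,\dots,A_t,X_t)$. The sampling process and statistics are defined for all $t\ge 0$ (the sampling rule does not depend on the threshold). Decaying-$\epsilon$-FOCuS: let $N_t^{(m)}$ be the number of times stream $m$ was selected up to and including time $t$. The local GLR statistic is $T_t^{(m)}=\max_{0\le k<N_t^{(m)}}\frac{(\sum_{i=k+1}^{N_t^{(m)}}X_i^{(m)})^2}{2(N_t^{(m)}-k)}$ (and $T_t^{(m)}=0$ if $N_t^{(m)}=0$);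 $T_t=\max_m T_t^{(m)}$ and $M_t=\arg\max_m T_t^{(m)}$. The local change-point estimate $\hat\nu_t^{(m)}$ is the time at which stream $m$'s $\hat k$-th observation was taken, where $\hat k$ is the maximizing index $k$ in $T_t^{(m)}$ (time $0$ if $\hat k=0$ or $N_t^{(m)}=0$); the global estimate is $\hat\nu_t=\hat\nu_t^{(M_t)}$; ties are broken uniformly at random. Initially $\hat\nu_0=0$, $M_0$ uniform on $[M]$. At time $t$, set $\epsilon_t=\min\{1, M/\max(1,t-\hat\nu_{t-1})^{1/3}\}$, draw $G_t\sim\mathrm{Bernoulli}(\epsilon_t)$ (conditionally on $\mathcal{F}_{t-1}$); if $G_t=1$ choose $A_t$ uniformly from $[M]$, otherwise $A_t=M_{t-1}$; then observe $X_t$ and update the statistics. The procedure stops at $\tau=\inf\{t\ge 1: T_t\ge\lambda\}$. *)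

theory Defs
  imports "HOL-Probability.Probability"
begin

text \<open>History of a stream: list of (time of observation, observed value), in order.
  The i-th observation X_i (1-based) of the stream is xs ! (i - 1).\<close>

type_synonym hist = "(nat \<times> real) list"

definition glr_term :: "hist \<Rightarrow> nat \<Rightarrow> real" where
  "glr_term xs k = (\<Sum>i\<in>{k..<length xs}. snd (xs ! i))\<^sup>2 / (2 * real (length xs - k))"

definition Tstat :: "hist \<Rightarrow> real" where
  "Tstat xs = (if xs = [] then 0 else Max (glr_term xs ` {..<length xs}))"

text \<open>Uniform choice from a finite nonempty set S using a Uniform[0,1] variable v.\<close>
definition pick :: "nat set \<Rightarrow> real \<Rightarrow> nat" where
  "pick S v = sorted_list_of_set S ! nat (min \<lfloor>v * real (card S)\<rfloor> (int (card S) - 1))"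

text \<open>Local change-point estimate: time of the k-hat-th observation (0 if k-hat = 0 or no data);
  ties among maximising k broken uniformly at random via v.\<close>
definition nuhat_of :: "hist \<Rightarrow> real \<Rightarrow> nat" where
  "nuhat_of xs v = (if xs = [] then 0 else
     (let k = pick {k. k < length xs \<and> glr_term xs k = Tstat xs} v
      in if k = 0 then 0 else fst (xs ! (k - 1))))"

text \<open>State at time t: (histories of all streams, M_t, nuhat_t).
  y m i : the (i+1)-th observation of stream m (stack-of-rewards model).
  u 0 t : uniform for G_t; u 1 t : uniform for the exploration choice of A_t;
  u 2 t : uniform for tie-breaking in M_t (u 2 0 gives uniform M_0);
  u 3 t : uniform for tie-breaking in khat.\<close>
fun focus_state :: "nat \<Rightarrow> (nat \<Rightarrow> nat \<Rightarrow> real) \<Rightarrow> (nat \<Rightarrow> nat \<Rightarrow> real) \<Rightarrow> nat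
    \<Rightarrow> (nat \<Rightarrow> hist) \<times> nat \<times> nat" where
  "focus_state M y u 0 = ((\<lambda>_. []), pick {1..M} (u 2 0), 0)"
| "focus_state M y u (Suc t) =
    (let (h, mp, nh) = focus_state M y u t;
         n = Suc t;
         eps = min 1 (real M / (max 1 (real n - real nh)) powr (1/3));
         a = (if u 0 n < eps then pick {1..M} (u 1 n) else mp);
         x = y a (length (h a));
         h' = h(a := h a @ [(n, x)]);
         Tmax = Max ((\<lambda>m. Tstat (h' m)) ` {1..M});
         m' = pick {m \<in> {1..M}. Tstat (h' m) = Tmax} (u 2 n);
         nh' = nuhat_of (h' m') (u 3 n)
     in (h', m', nh'))"

definition T_loc :: "nat \<Rightarrow> (nat \<Rightarrow> nat \<Rightarrow> real) \<Rightarrow> (nat \<Rightarrow> nat \<Rightarrow> real) \<Rightarrow> nat \<Rightarrow> nat \<Rightarrow> real" where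
  "T_loc M y u t m = Tstat (fst (focus_state M y u t) m)"

end

theory Submission
  imports Defs "HOL-Real_Asymp.Real_Asymp"
begin


lemma focus_fst_Suc:
  assumes "focus_state M y u t = (h, mp, nh)"
  shows "fst (focus_state M y u (Suc t)) =
    (let a = (if u 0 (Suc t) < min 1 (real M / (max 1 (real (Suc t) - real nh)) powr (1/3))
              then pick {1..M} (u 1 (Suc t)) else mp)
     in h(a := h a @ [(Suc t, y a (length (h a)))]))"
  using assms by (simp add: Let_def)

lemma focus_hist:
  "(\<forall>m. map snd (fst (focus_state M y u t) m) = map (y m) [0..<length (fst (focus_state M y u t) m)])
   \<and> (\<forall>m. length (fst (focus_state M y u t) m) \<le> t)"
proof (induction t)
  case 0 then show ?case by simp
next
  case (Suc t)
  obtain h mp nh where st: "focus_state M y u t = (h, mp, nh)" by (cases "focus_state M y u t") auto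
  obtain a where fa: "fst (focus_state M y u (Suc t)) = h(a := h a @ [(Suc t, y a (length (h a)))])"
    using focus_fst_Suc[OF st] by (simp add: Let_def)
  have L: "length (h m) \<le> t" for m using Suc.IH st by simp
  have L2: "length (h a) \<noteq> t \<Longrightarrow> Suc (length (h a)) \<le> t" using L[of a] by simp
  show ?case using Suc.IH L L2 unfolding fa st by (auto simp: le_Suc_eq)
qed

lemma pick_first:
  assumes "M \<ge> 1" "v < 1 / real M"
  shows "pick {1..M} v = 1"
proof -
  have "v * real M < 1" using assms by (simp add: field_simps)
  then have "\<lfloor>v * real M\<rfloor> \<le> 0" by linarith
  then have "min \<lfloor>v * real (card {1..M})\<rfloor> (int (card {1..M}) - 1) \<le> 0" by (simp add: min.coboundedI1)
  then have "nat (min \<lfloor>v * real (card {1..M})\<rfloor> (int (card {1..M}) - 1)) = 0" by simp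
  moreover have "sorted_list_of_set {1..M} ! 0 = 1" using assms
    by (cases "M = 1") (simp_all add: atLeastLessThanSuc_atLeastAtMost[symmetric] nth_append del: atLeastLessThanSuc_atLeastAtMost)
  ultimately show ?thesis unfolding pick_def by simp
qed

definition explore1 :: "nat \<Rightarrow> (nat \<Rightarrow> nat \<Rightarrow> real) \<Rightarrow> nat \<Rightarrow> bool" where
  "explore1 M u n \<longleftrightarrow> u 0 n < real n powr (-1/3) \<and> u 1 n < 1 / real M"

lemma eps_ge:
  assumes "M \<ge> 1" "n \<ge> 1"
  shows "real n powr (-1/3) \<le> min 1 (real M / (max 1 (real n - real nh)) powr (1/3))"
proof -
  have "real n powr (-1/3) \<le> 1" using assms by (simp add: powr_le_one_le ge_one_powr_ge_zero powr_minus_divide)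
  moreover have "(max 1 (real n - real nh)) powr (1/3) \<le> real n powr (1/3)"
    using assms by (intro powr_mono2) auto
  then have "1 / real n powr (1/3) \<le> real M / (max 1 (real n - real nh)) powr (1/3)"
    using assms by (intro frac_le) auto
  ultimately show ?thesis by (simp add: powr_minus_divide)
qed

lemma focus_count:
  assumes "M \<ge> 1"
  shows "card {n\<in>{1..t}. explore1 M u n} \<le> length (fst (focus_state M y u t) 1)"
proof (induction t)
  case 0 then show ?case by simp
next
  case (Suc t)
  obtain h mp nh where st: "focus_state M y u t = (h, mp, nh)" by (cases "focus_state M y u t") auto
  define a where "a = (if u 0 (Suc t) < min 1 (real M / (max 1 (real (Suc t) - real nh)) powr (1/3))
              then pick {1..M} (u 1 (Suc t)) else mp)"
  have fa: "fst (focus_state M y u (Suc t)) = h(a := h a @ [(Suc t, y a (length (h a)))])"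
    using focus_fst_Suc[OF st] by (simp add: Let_def a_def)
  have IH: "card {n\<in>{1..t}. explore1 M u n} \<le> length (h 1)" using Suc.IH st by simp
  show ?case
  proof (cases "explore1 M u (Suc t)")
    case True
    have "a = 1" unfolding a_def using True eps_ge[OF assms, of "Suc t" nh] pick_first[OF assms]
      by (auto simp: explore1_def)
    have "{n\<in>{1..Suc t}. explore1 M u n} = insert (Suc t) {n\<in>{1..t}. explore1 M u n}"
      using True by (auto simp: le_Suc_eq)
    then have "card {n\<in>{1..Suc t}. explore1 M u n} = Suc (card {n\<in>{1..t}. explore1 M u n})" by simp
    moreover have "length (fst (focus_state M y u (Suc t)) 1) = Suc (length (h 1))"
      by (simp only: fa) (simp add: \<open>a = 1\<close>)
    ultimately show ?thesis using IH by simp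
  next
    case False
    have "{n\<in>{1..Suc t}. explore1 M u n} = {n\<in>{1..t}. explore1 M u n}"
      using False by (auto simp: le_Suc_eq)
    moreover have "length (fst (focus_state M y u (Suc t)) 1) \<ge> length (h 1)"
      by (simp only: fa) simp
    ultimately show ?thesis using IH by simp
  qed
qed

lemma Tstat_ge0: "xs \<noteq> [] \<Longrightarrow> glr_term xs 0 \<le> Tstat xs"
  unfolding Tstat_def by (auto intro!: Max_ge)

lemma Tstat_le: "0 \<le> B \<Longrightarrow> (\<And>k. k < length xs \<Longrightarrow> glr_term xs k \<le> B) \<Longrightarrow> Tstat xs \<le> B"
  unfolding Tstat_def by (cases "xs = []") (auto intro!: Max.boundedI)

lemma glr_term_hist:
  assumes "map snd xs = map f [0..<length xs]"
  shows "glr_term xs k = (\<Sum>i\<in>{k..<length xs}. f i)\<^sup>2 / (2 * real (length xs - k))"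
proof -
  have "\<And>i. i < length xs \<Longrightarrow> snd (xs ! i) = f i"
    using assms by (metis add_0 diff_zero length_map nth_map nth_upt)
  then show ?thesis unfolding glr_term_def by (metis (no_types, lifting) atLeastLessThan_iff sum.cong)
qed

lemma eventually_nat_of_real:
  assumes "eventually (\<lambda>x::real. P x) at_top"
  shows "eventually (\<lambda>t::nat. P (real t)) sequentially"
  using assms filterlim_real_sequentially by (simp add: filterlim_iff)

lemma null_bound:
  assumes "\<exists>n0. \<forall>n\<ge>n0. \<forall>k<n. (\<Sum>i\<in>{k..<n}. f i)\<^sup>2 / (2 * real (n - k)) \<le> sqrt (real n)"
  shows "\<exists>K\<ge>0. \<forall>n k. k < n \<longrightarrow> (\<Sum>i\<in>{k..<n}. f i)\<^sup>2 / (2 * real (n - k)) \<le> sqrt (real n) + K"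
proof -
  obtain n0 where n0: "\<forall>n\<ge>n0. \<forall>k<n. (\<Sum>i\<in>{k..<n}. f i)\<^sup>2 / (2 * real (n - k)) \<le> sqrt (real n)"
    using assms by blast
  define g where "g n k = (\<Sum>i\<in>{k..<n}. f i)\<^sup>2 / (2 * real (n - k))" for n k
  have g0: "g n k \<ge> 0" for n k unfolding g_def by simp
  define K where "K = (\<Sum>n<n0. \<Sum>k<n. g n k)"
  have K0: "K \<ge> 0" unfolding K_def by (intro sum_nonneg) (simp add: g0)
  have "g n k \<le> sqrt (real n) + K" if "k < n" for n k
  proof (cases "n \<ge> n0")
    case True then show ?thesis using n0 that K0 unfolding g_def by force
  next
    case False
    have "g n k \<le> (\<Sum>k<n. g n k)" using that by (intro member_le_sum) (auto simp: g0)
    also have "\<dots> \<le> K" unfolding K_def using False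
      by (intro member_le_sum[where f="\<lambda>n. \<Sum>k<n. g n k"]) (auto intro!: sum_nonneg simp: g0)
    finally show ?thesis using real_sqrt_ge_zero[of "real n"] by linarith
  qed
  then show ?thesis using K0 unfolding g_def by blast
qed

lemma final_det:
  assumes M: "M > 1" and mu: "\<mu>1 \<noteq> 0"
    and G3: "\<forall>m\<in>{2..M}. \<exists>n0. \<forall>n\<ge>n0. \<forall>k<n. (\<Sum>i\<in>{k..<n}. y m i)\<^sup>2 / (2 * real (n - k)) \<le> sqrt (real n)"
    and G4: "\<exists>N0. \<forall>N\<ge>N0. \<bar>(\<Sum>i<N. y 1 i) - \<mu>1 * real N\<bar> < \<bar>\<mu>1\<bar> * real N / 2"
    and G5: "\<exists>t0. \<forall>t\<ge>t0. real (card {n\<in>{1..t}. explore1 M u n}) > real t powr (2/3) / (2 * real M)"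
  shows "\<exists>t0. \<forall>t>t0. T_loc M y u t 1 > Max ((\<lambda>m. T_loc M y u t m) ` {2..M})"
proof -
  have "\<forall>m\<in>{2..M}. \<exists>K\<ge>0. \<forall>n k. k < n \<longrightarrow> (\<Sum>i\<in>{k..<n}. y m i)\<^sup>2 / (2 * real (n - k)) \<le> sqrt (real n) + K"
    using G3 null_bound by blast
  then obtain Kf where Kf: "\<And>m. m \<in> {2..M} \<Longrightarrow> Kf m \<ge> 0 \<and> (\<forall>n k. k < n \<longrightarrow> (\<Sum>i\<in>{k..<n}. y m i)\<^sup>2 / (2 * real (n - k)) \<le> sqrt (real n) + Kf m)"
    by metis
  define K where "K = (\<Sum>m\<in>{2..M}. Kf m)"
  have KfK: "Kf m \<le> K" if "m \<in> {2..M}" for m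
    unfolding K_def using that Kf by (intro member_le_sum) auto
  have K0: "K \<ge> 0" unfolding K_def using Kf by (intro sum_nonneg) auto
  have Tm: "T_loc M y u t m \<le> sqrt (real t) + K" if m: "m \<in> {2..M}" for t m
  proof -
    let ?H = "fst (focus_state M y u t) m"
    have H1: "map snd ?H = map (y m) [0..<length ?H]" and H2: "length ?H \<le> t"
      using focus_hist[of M y u t] by auto
    have "Tstat ?H \<le> sqrt (real t) + K"
    proof (rule Tstat_le)
      show "0 \<le> sqrt (real t) + K" using K0 by simp
      fix k assume k: "k < length ?H"
      have "glr_term ?H k = (\<Sum>i\<in>{k..<length ?H}. y m i)\<^sup>2 / (2 * real (length ?H - k))"
        by (rule glr_term_hist[OF H1])
      also have "\<dots> \<le> sqrt (real (length ?H)) + Kf m" using Kf[OF m] k by blast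
      also have "\<dots> \<le> sqrt (real t) + K" using H2 KfK[OF m] by (intro add_mono) auto
      finally show "glr_term ?H k \<le> sqrt (real t) + K" .
    qed
    then show ?thesis unfolding T_loc_def .
  qed
  obtain N0 where N0: "\<forall>N\<ge>N0. \<bar>(\<Sum>i<N. y 1 i) - \<mu>1 * real N\<bar> < \<bar>\<mu>1\<bar> * real N / 2"
    using G4 by blast
  have T1: "T_loc M y u t 1 \<ge> \<mu>1\<^sup>2 * real (length (fst (focus_state M y u t) 1)) / 8"
    if "length (fst (focus_state M y u t) 1) \<ge> max N0 1" for t
  proof -
    let ?H = "fst (focus_state M y u t) 1"
    let ?N = "length ?H"
    have H1: "map snd ?H = map (y 1) [0..<?N]"
      using focus_hist[of M y u t] by auto
    have N1: "?N \<ge> 1" using that by simp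
    have Npos: "real ?N > 0" using N1 by (metis of_nat_0_less_iff less_le_trans zero_less_one)
    have ne: "?H \<noteq> []" using N1 by (cases ?H) auto
    have S: "\<bar>(\<Sum>i<?N. y 1 i) - \<mu>1 * real ?N\<bar> < \<bar>\<mu>1\<bar> * real ?N / 2" using N0 that by auto
    have S2: "\<bar>\<Sum>i<?N. y 1 i\<bar> \<ge> \<bar>\<mu>1\<bar> * real ?N / 2"
      using S Npos by (auto simp: abs_mult abs_if split: if_splits)
    have "(\<bar>\<mu>1\<bar> * real ?N / 2)\<^sup>2 \<le> (\<bar>\<Sum>i<?N. y 1 i\<bar>)\<^sup>2"
      using S2 Npos by (intro power_mono) auto
    then have sq: "\<mu>1\<^sup>2 * real ?N ^ 2 / 4 \<le> (\<Sum>i<?N. y 1 i)\<^sup>2"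
      by (simp add: power_mult_distrib power_divide)
    have "glr_term ?H 0 = (\<Sum>i\<in>{0..<?N}. y 1 i)\<^sup>2 / (2 * real ?N)"
      using glr_term_hist[OF H1, of 0] by simp
    also have "\<dots> = (\<Sum>i<?N. y 1 i)\<^sup>2 / (2 * real ?N)" by (simp add: atLeast0LessThan)
    also have "\<dots> \<ge> (\<mu>1\<^sup>2 * real ?N ^ 2 / 4) / (2 * real ?N)"
      using sq Npos by (intro divide_right_mono) auto
    finally have "glr_term ?H 0 \<ge> \<mu>1\<^sup>2 * real ?N / 8"
      using Npos by (simp add: power2_eq_square field_simps)
    then show ?thesis unfolding T_loc_def using Tstat_ge0[OF ne] by linarith
  qed
  obtain t5 where t5: "\<forall>t\<ge>t5. real (card {n\<in>{1..t}. explore1 M u n}) > real t powr (2/3) / (2 * real M)"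
    using G5 by blast
  have c0: "\<mu>1\<^sup>2 / 8 / (2 * real M) > 0" using M mu by simp
  have c1: "1 / (2 * real M) > 0" using M by simp
  have ev1: "eventually (\<lambda>x::real. (1 / (2 * real M)) * x powr (2/3) > sqrt x + real (max N0 1)) at_top"
    using c1 by real_asymp
  have ev2: "eventually (\<lambda>x::real. (\<mu>1\<^sup>2 / 8 / (2 * real M)) * x powr (2/3) > sqrt x + K) at_top"
    using c0 by real_asymp
  have "eventually (\<lambda>t::nat. (1 / (2 * real M)) * real t powr (2/3) > sqrt (real t) + real (max N0 1)
      \<and> (\<mu>1\<^sup>2 / 8 / (2 * real M)) * real t powr (2/3) > sqrt (real t) + K \<and> t \<ge> t5) sequentially"
    using eventually_nat_of_real[OF ev1] eventually_nat_of_real[OF ev2] eventually_ge_at_top[of t5]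
    by eventually_elim auto
  then obtain t0 where t0: "\<And>t. t \<ge> t0 \<Longrightarrow> (1 / (2 * real M)) * real t powr (2/3) > sqrt (real t) + real (max N0 1)
      \<and> (\<mu>1\<^sup>2 / 8 / (2 * real M)) * real t powr (2/3) > sqrt (real t) + K \<and> t \<ge> t5"
    unfolding eventually_sequentially by blast
  have "T_loc M y u t 1 > Max ((\<lambda>m. T_loc M y u t m) ` {2..M})" if "t > t0" for t
  proof -
    have A: "(1 / (2 * real M)) * real t powr (2/3) > sqrt (real t) + real (max N0 1)"
      and B: "(\<mu>1\<^sup>2 / 8 / (2 * real M)) * real t powr (2/3) > sqrt (real t) + K" and C: "t \<ge> t5"
      using t0[of t] that by auto
    let ?N = "length (fst (focus_state M y u t) 1)"
    have c1: "card {n\<in>{1..t}. explore1 M u n} \<le> ?N"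
      using focus_count[where M=M and u=u and t=t and y=y] M by simp
    have c2: "real (card {n\<in>{1..t}. explore1 M u n}) > real t powr (2/3) / (2 * real M)"
      using t5 C by blast
    have cnt: "real ?N \<ge> real t powr (2/3) / (2 * real M)"
      using c1 c2 of_nat_le_iff[of "card {n\<in>{1..t}. explore1 M u n}" ?N] by linarith
    have eqA: "(1 / (2 * real M)) * real t powr (2/3) = real t powr (2/3) / (2 * real M)" by simp
    have "real t powr (2/3) / (2 * real M) \<ge> real (max N0 1)" using A eqA real_sqrt_ge_zero[of "real t"] by linarith
    then have Nbig: "?N \<ge> max N0 1" using cnt by linarith
    have "T_loc M y u t 1 \<ge> \<mu>1\<^sup>2 * real ?N / 8" using T1[OF Nbig] .
    moreover have "\<mu>1\<^sup>2 * real ?N / 8 \<ge> (\<mu>1\<^sup>2 / 8 / (2 * real M)) * real t powr (2/3)"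
    proof -
      have "\<mu>1\<^sup>2 * (real t powr (2/3) / (2 * real M)) \<le> \<mu>1\<^sup>2 * real ?N"
        using cnt by (intro mult_left_mono) auto
      then show ?thesis by simp
    qed
    ultimately have "T_loc M y u t 1 > sqrt (real t) + K" using B by linarith
    then show ?thesis using Tm M by (subst Max_less_iff) (force, force, fastforce intro: le_less_trans)
  qed
  then show ?thesis by blast
qed



lemma summable_bigo_sq:
  fixes f :: "nat \<Rightarrow> real"
  assumes "f \<in> O(\<lambda>n. 1 / real n ^ 2)"
  shows "summable f"
proof (rule summable_comparison_test_bigo[OF _ assms])
  have "summable (\<lambda>n. inverse (real n ^ 2))" by (rule inverse_power_summable) simp
  then show "summable (\<lambda>n. norm (1 / real n ^ 2))" by (simp add: divide_inverse)
qed

lemma (in prob_space) normal_tail: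
  fixes Z :: "'a \<Rightarrow> real"
  assumes D: "distributed M lborel Z (\<lambda>x. ennreal (normal_density \<mu> \<sigma> x))"
    and s: "\<sigma> > 0" and a: "a > 0"
  shows "prob {\<omega>\<in>space M. a \<le> \<bar>Z \<omega> - \<mu>\<bar>} \<le> fact (2*k) / ((2/\<sigma>\<^sup>2)^k * fact k) / a^(2*k)"
proof -
  have Zm[measurable]: "Z \<in> borel_measurable M" using distributed_measurable[OF D] by simp
  have hb: "has_bochner_integral lborel (\<lambda>x. normal_density \<mu> \<sigma> x * (x - \<mu>)^(2*k))
      (fact (2*k) / ((2/\<sigma>\<^sup>2)^k * fact k))" using normal_moment_even[OF s] .
  have int: "integrable M (\<lambda>\<omega>. (Z \<omega> - \<mu>)^(2*k))"
    using distributed_integrable[OF D, of "\<lambda>x. (x-\<mu>)^(2*k)"] hb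
    by (auto simp: has_bochner_integral_iff)
  have E: "expectation (\<lambda>\<omega>. (Z \<omega> - \<mu>)^(2*k)) = fact (2*k) / ((2/\<sigma>\<^sup>2)^k * fact k)"
    using distributed_integral[OF D, of "\<lambda>x. (x-\<mu>)^(2*k)"] hb
    by (auto simp: has_bochner_integral_iff)
  have "prob {\<omega>\<in>space M. a \<le> \<bar>Z \<omega> - \<mu>\<bar>} \<le> prob {\<omega>\<in>space M. (Z \<omega> - \<mu>)^(2*k) \<ge> a^(2*k)}"
  proof (intro finite_measure_mono)
    show "{\<omega>\<in>space M. a \<le> \<bar>Z \<omega> - \<mu>\<bar>} \<subseteq> {\<omega>\<in>space M. (Z \<omega> - \<mu>)^(2*k) \<ge> a^(2*k)}"
    proof safe
      fix \<omega> assume "\<omega> \<in> space M" "a \<le> \<bar>Z \<omega> - \<mu>\<bar>"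
      then have "a^(2*k) \<le> \<bar>Z \<omega> - \<mu>\<bar>^(2*k)" using a by (intro power_mono) auto
      also have "\<dots> = (Z \<omega> - \<mu>)^(2*k)" by (simp add: power_even_abs)
      finally show "a^(2*k) \<le> (Z \<omega> - \<mu>)^(2*k)" .
    qed
  qed measurable
  also have "\<dots> \<le> expectation (\<lambda>\<omega>. (Z \<omega> - \<mu>)^(2*k)) / a^(2*k)"
    by (rule integral_Markov_inequality_measure[OF int, where A="space M"]) (auto simp: a)
  finally show ?thesis using E by simp
qed

lemma (in prob_space) uniform_prob:
  fixes U :: "'a \<Rightarrow> real"
  assumes D: "distributed M lborel U (indicator {0..1})" and c: "0 \<le> c" "c \<le> 1"
  shows "prob {\<omega>\<in>space M. U \<omega> < c} = c"
proof -
  have "emeasure M (U -` {..<c} \<inter> space M) = (\<integral>\<^sup>+x. indicator {0..1} x * indicator {..<c} x \<partial>lborel)"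
    by (rule distributed_emeasure[OF D]) simp
  also have "\<dots> = (\<integral>\<^sup>+x. indicator {0..<c} x \<partial>lborel)"
    using c by (intro nn_integral_cong) (auto simp: indicator_def)
  also have "\<dots> = ennreal c" using c by simp
  finally have "emeasure M {\<omega>\<in>space M. U \<omega> < c} = ennreal c"
    by (simp add: vimage_def Int_def conj_commute)
  then show ?thesis using c by (simp add: emeasure_eq_measure)
qed

lemma (in prob_space) sum_normal_window:
  fixes X :: "(nat \<times> nat) + (nat \<times> nat) \<Rightarrow> 'a \<Rightarrow> real"
  assumes indep: "indep_vars (\<lambda>_. borel) X I" and sub: "Inl ` ({m} \<times> S) \<subseteq> I"
    and S: "finite S" "S \<noteq> {}"
    and D: "\<And>i. distributed M lborel (X (Inl (m, i))) (\<lambda>x. ennreal (normal_density \<mu> 1 x))"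
  shows "distributed M lborel (\<lambda>\<omega>. \<Sum>i\<in>S. X (Inl (m, i)) \<omega>)
           (\<lambda>x. ennreal (normal_density (real (card S) * \<mu>) (sqrt (real (card S))) x))"
proof -
  define g where "g = (\<lambda>i. Inl (m, i) :: (nat \<times> nat) + (nat \<times> nat))"
  define J where "J = g ` S"
  have inj: "inj_on g S" by (auto simp: inj_on_def g_def)
  have cJ: "card J = card S" unfolding J_def using card_image[OF inj] .
  have "distributed M lborel (\<lambda>\<omega>. \<Sum>j\<in>J. X j \<omega>)
      (\<lambda>x. ennreal (normal_density (\<Sum>j\<in>J. \<mu>) (sqrt (\<Sum>j\<in>J. 1\<^sup>2)) x))"
  proof (rule sum_indep_normal[where \<mu>="\<lambda>_. \<mu>" and \<sigma>="\<lambda>_. 1"])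
    show "indep_vars (\<lambda>i. borel) X J"
      by (rule indep_vars_subset[OF indep]) (use sub in \<open>auto simp: J_def g_def\<close>)
  qed (use S D in \<open>auto simp: J_def g_def\<close>)
  moreover have "(\<lambda>\<omega>. \<Sum>j\<in>J. X j \<omega>) = (\<lambda>\<omega>. \<Sum>i\<in>S. X (Inl (m, i)) \<omega>)"
  proof
    fix \<omega> show "(\<Sum>j\<in>J. X j \<omega>) = (\<Sum>i\<in>S. X (Inl (m, i)) \<omega>)"
      unfolding J_def using sum.reindex[OF inj, of "\<lambda>j. X j \<omega>"] by (simp add: g_def)
  qed
  ultimately show ?thesis using cJ by simp
qed



theorem corollary1:
  fixes P :: "'a measure" and M :: nat and \<mu>1 :: real
    and Y :: "nat \<Rightarrow> nat \<Rightarrow> 'a \<Rightarrow> real" and U :: "nat \<Rightarrow> nat \<Rightarrow> 'a \<Rightarrow> real"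
  assumes "prob_space P"
    and "M > 1"
    and "\<mu>1 \<noteq> 0"
    and "prob_space.indep_vars P (\<lambda>_. borel)
           (\<lambda>k \<omega>. case k of Inl (m, i) \<Rightarrow> Y m i \<omega> | Inr (j, t) \<Rightarrow> U j t \<omega>)
           (Inl ` ({1..M} \<times> UNIV) \<union> Inr ` ({..<4} \<times> UNIV))"
    and "\<forall>i. distributed P lborel (Y 1 i) (\<lambda>x. ennreal (normal_density \<mu>1 1 x))"
    and "\<forall>m\<in>{2..M}. \<forall>i. distributed P lborel (Y m i) (\<lambda>x. ennreal (normal_density 0 1 x))"
    and "\<forall>j<4. \<forall>t. distributed P lborel (U j t) (indicator {0..1})"
  shows "AE \<omega> in P. \<exists>t0. \<forall>t>t0.
           T_loc M (\<lambda>m i. Y m i \<omega>) (\<lambda>j s. U j s \<omega>) t 1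
             > Max ((\<lambda>m. T_loc M (\<lambda>m i. Y m i \<omega>) (\<lambda>j s. U j s \<omega>) t m) ` {2..M})"
proof -
  interpret prob_space P by (rule assms(1))
  define X :: "(nat \<times> nat) + (nat \<times> nat) \<Rightarrow> 'a \<Rightarrow> real" where
    "X = (\<lambda>k \<omega>. case k of Inl (m, i) \<Rightarrow> Y m i \<omega> | Inr (j, t) \<Rightarrow> U j t \<omega>)"
  define I :: "((nat \<times> nat) + (nat \<times> nat)) set" where
    "I = Inl ` ({1..M} \<times> UNIV) \<union> Inr ` ({..<4} \<times> UNIV)"
  have indep: "indep_vars (\<lambda>_. borel) X I" using assms(4) unfolding X_def I_def .
  have XY[simp]: "X (Inl (m, i)) = Y m i" for m i by (simp add: X_def)
  have XU[simp]: "X (Inr (j, t)) = U j t" for j t by (simp add: X_def)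
  have DY1: "distributed P lborel (Y 1 i) (\<lambda>x. ennreal (normal_density \<mu>1 1 x))" for i
    using assms(5) by blast
  have DU: "j < 4 \<Longrightarrow> distributed P lborel (U j t) (indicator {0..1})" for j t
    using assms(7) by blast
  have Y1m[measurable]: "Y 1 i \<in> borel_measurable P" for i
    using distributed_measurable[OF DY1] by simp
  have U0m[measurable]: "U 0 t \<in> borel_measurable P" for t
    using distributed_measurable[OF DU[of 0]] by simp
  have U1m[measurable]: "U 1 t \<in> borel_measurable P" for t
    using distributed_measurable[OF DU[of 1]] by simp

  have G3: "AE \<omega> in P. \<forall>m\<in>{2..M}. \<exists>n0. \<forall>n\<ge>n0. \<forall>k<n.
      (\<Sum>i\<in>{k..<n}. Y m i \<omega>)\<^sup>2 / (2 * real (n - k)) \<le> sqrt (real n)"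
  proof (rule AE_finite_allI)
    fix m assume m: "m \<in> {2..M}"
    show "AE \<omega> in P. \<exists>n0. \<forall>n\<ge>n0. \<forall>k<n.
      (\<Sum>i\<in>{k..<n}. Y m i \<omega>)\<^sup>2 / (2 * real (n - k)) \<le> sqrt (real n)"
    proof -
      have DYm: "distributed P lborel (Y m i) (\<lambda>x. ennreal (normal_density 0 1 x))" for i
        using assms(6) m by blast
      have Ymm[measurable]: "Y m i \<in> borel_measurable P" for i
        using distributed_measurable[OF DYm] by simp
      define W where "W n k = {\<omega>\<in>space P. sqrt (2 * real (n - k) * sqrt (real n)) \<le> \<bar>(\<Sum>i\<in>{k..<n}. Y m i \<omega>) - 0\<bar>}" for n k
      define A where "A n = (\<Union>k\<in>{..<n}. W n k)" for n
      have Wm[measurable]: "W n k \<in> events" for n k unfolding W_def by measurable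
      have Am: "A n \<in> events" for n unfolding A_def by (auto intro!: sets.finite_UN)
      define C :: real where "C = fact 12 / (fact 6 * 4096)"
      have Wbound: "prob (W n k) \<le> C / real n ^ 3" if kn: "k < n" for n k
      proof -
        define L where "L = real (n - k)"
        have L0: "L > 0" using kn by (simp add: L_def)
        have npos: "real n > 0" using kn by simp
        have Dsum: "distributed P lborel (\<lambda>\<omega>. \<Sum>i\<in>{k..<n}. X (Inl (m, i)) \<omega>)
           (\<lambda>x. ennreal (normal_density (real (card {k..<n}) * 0) (sqrt (real (card {k..<n}))) x))"
          by (rule sum_normal_window[OF indep]) (use kn m DYm in \<open>auto simp: I_def\<close>)
        then have Dsum': "distributed P lborel (\<lambda>\<omega>. \<Sum>i\<in>{k..<n}. Y m i \<omega>)
           (\<lambda>x. ennreal (normal_density 0 (sqrt L) x))"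
          by (simp add: L_def)
        have "prob (W n k) \<le> fact (2*6) / ((2 / (sqrt L)\<^sup>2)^6 * fact 6) / (sqrt (2 * L * sqrt (real n)))^(2*6)"
          unfolding W_def L_def[symmetric]
          by (rule normal_tail[OF Dsum', where k=6]) (use L0 npos in auto)
        also have "\<dots> = C / real n ^ 3"
        proof -
          have e1: "(sqrt L)\<^sup>2 = L" using L0 by simp
          have x0: "0 \<le> 2 * L * sqrt (real n)" using L0 by simp
          have e2: "(sqrt (2 * L * sqrt (real n)))^(2*6) = (2 * L * sqrt (real n))^6"
            by (simp only: power_mult real_sqrt_pow2[OF x0])
          have "sqrt (real n) ^ 6 = sqrt (real n) ^ (2*3)" by simp
          also have "\<dots> = (sqrt (real n) ^ 2) ^ 3" by (rule power_mult)
          also have "\<dots> = real n ^ 3" by simp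
          finally have e3: "sqrt (real n) ^ 6 = real n ^ 3" .
          have e4: "(2 / L)^6 * (2 * L * sqrt (real n))^6 = 4096 * real n ^ 3"
            using L0 e3 by (simp add: power_mult_distrib[symmetric] power_mult_distrib field_simps)
          show ?thesis unfolding e1 e2 C_def using e4 L0 npos
            by (simp add: field_simps)
        qed
        finally show ?thesis .
      qed
      have Abound: "prob (A n) \<le> real n * (C / real n ^ 3)" for n
      proof -
        have "prob (A n) \<le> (\<Sum>k\<in>{..<n}. prob (W n k))"
          unfolding A_def by (rule finite_measure_subadditive_finite) auto
        also have "\<dots> \<le> real (card {..<n}) * (C / real n ^ 3)"
          by (rule sum_bounded_above) (use Wbound in auto)
        finally show ?thesis by simp
      qed
      have "summable (\<lambda>n. real n * (C / real n ^ 3))"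
        unfolding C_def by (intro summable_bigo_sq) (simp add: fact_numeral, real_asymp)
      then have sA: "summable (\<lambda>n. prob (A n))"
        by (rule summable_comparison_test'[where N=0]) (use Abound in auto)
      have "AE \<omega> in P. eventually (\<lambda>n. \<omega> \<in> space P - A n) sequentially"
        by (rule borel_cantelli_AE1) (use sA Am in \<open>auto simp: emeasure_eq_measure\<close>)
      then show ?thesis
      proof (rule AE_mp[OF _ AE_I2[OF impI]])
        fix \<omega> assume \<omega>: "\<omega> \<in> space P" and ev: "eventually (\<lambda>n. \<omega> \<in> space P - A n) sequentially"
        then obtain n0 where n0: "\<And>n. n \<ge> n0 \<Longrightarrow> \<omega> \<notin> A n" by (auto simp: eventually_sequentially)
        show "\<exists>n0. \<forall>n\<ge>n0. \<forall>k<n. (\<Sum>i\<in>{k..<n}. Y m i \<omega>)\<^sup>2 / (2 * real (n - k)) \<le> sqrt (real n)"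
        proof (intro exI allI impI)
          fix n k assume "n0 \<le> n" "k < n"
          then have "\<omega> \<notin> W n k" using n0 unfolding A_def by blast
          then have lt: "\<bar>\<Sum>i\<in>{k..<n}. Y m i \<omega>\<bar> < sqrt (2 * real (n - k) * sqrt (real n))"
            using \<omega> unfolding W_def by auto
          have L0: "real (n - k) > 0" using \<open>k < n\<close> by simp
          have "(\<Sum>i\<in>{k..<n}. Y m i \<omega>)\<^sup>2 = \<bar>\<Sum>i\<in>{k..<n}. Y m i \<omega>\<bar>\<^sup>2" by simp
          also have "\<dots> \<le> (sqrt (2 * real (n - k) * sqrt (real n)))\<^sup>2"
            using lt by (intro power_mono) auto
          also have "\<dots> = 2 * real (n - k) * sqrt (real n)" using L0 by simp
          finally show "(\<Sum>i\<in>{k..<n}. Y m i \<omega>)\<^sup>2 / (2 * real (n - k)) \<le> sqrt (real n)"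
            using L0 by (simp add: divide_le_eq mult.commute)
        qed
      qed
    qed
  qed simp

  have G4: "AE \<omega> in P. \<exists>N0. \<forall>N\<ge>N0. \<bar>(\<Sum>i<N. Y 1 i \<omega>) - \<mu>1 * real N\<bar> < \<bar>\<mu>1\<bar> * real N / 2"
  proof -
    define B where "B N = {\<omega>\<in>space P. \<bar>\<mu>1\<bar> * real N / 2 \<le> \<bar>(\<Sum>i<N. Y 1 i \<omega>) - \<mu>1 * real N\<bar>}" for N
    have Bm[measurable]: "B N \<in> events" for N unfolding B_def by measurable
    define bnd where "bnd N = fact (2*2) / ((2 / (sqrt (real N))\<^sup>2)^2 * fact 2) / (\<bar>\<mu>1\<bar> * real N / 2)^(2*2)" for N :: nat
    have Bbound: "prob (B N) \<le> bnd N" if N: "N \<ge> 1" for N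
    proof -
      have Dsum: "distributed P lborel (\<lambda>\<omega>. \<Sum>i\<in>{..<N}. X (Inl (1, i)) \<omega>)
           (\<lambda>x. ennreal (normal_density (real (card {..<N}) * \<mu>1) (sqrt (real (card {..<N}))) x))"
        by (rule sum_normal_window[OF indep]) (use N assms(2) DY1 in \<open>auto simp: I_def lessThan_empty_iff\<close>)
      then have Dsum': "distributed P lborel (\<lambda>\<omega>. \<Sum>i<N. Y 1 i \<omega>)
           (\<lambda>x. ennreal (normal_density (\<mu>1 * real N) (sqrt (real N)) x))"
        by (simp add: mult.commute)
      show ?thesis unfolding B_def bnd_def
        by (rule normal_tail[OF Dsum', where k=2]) (use N assms(3) in auto)
    qed
    have "summable bnd"
      unfolding bnd_def using assms(3) by (intro summable_bigo_sq) (simp add: fact_numeral, real_asymp)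
    then have sB: "summable (\<lambda>N. prob (B N))"
      by (rule summable_comparison_test'[where N=1]) (use Bbound in auto)
    have "AE \<omega> in P. eventually (\<lambda>N. \<omega> \<in> space P - B N) sequentially"
      by (rule borel_cantelli_AE1) (use sB in \<open>auto simp: emeasure_eq_measure\<close>)
    then show ?thesis
    proof (rule AE_mp[OF _ AE_I2[OF impI]])
      fix \<omega> assume \<omega>: "\<omega> \<in> space P" and ev: "eventually (\<lambda>N. \<omega> \<in> space P - B N) sequentially"
      then obtain N0 where N0: "\<And>N. N \<ge> N0 \<Longrightarrow> \<omega> \<notin> B N" by (auto simp: eventually_sequentially)
      show "\<exists>N0. \<forall>N\<ge>N0. \<bar>(\<Sum>i<N. Y 1 i \<omega>) - \<mu>1 * real N\<bar> < \<bar>\<mu>1\<bar> * real N / 2"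
        using N0 \<omega> unfolding B_def by (auto simp: not_le)
    qed
  qed

  have G5: "AE \<omega> in P. \<exists>t0. \<forall>t\<ge>t0.
      real (card {n\<in>{1..t}. explore1 M (\<lambda>j s. U j s \<omega>) n}) > real t powr (2/3) / (2 * real M)"
  proof -
    define c0 where "c0 n = real n powr (-1/3)" for n :: nat
    define c1 where "c1 = 1 / real M"
    define ind where "ind n \<omega> = (if U 0 n \<omega> < c0 n \<and> U 1 n \<omega> < c1 then 1 else 0::real)" for n \<omega>
    have indm[measurable]: "ind n \<in> borel_measurable P" for n unfolding ind_def by measurable
    have c0_01: "0 \<le> c0 n \<and> c0 n \<le> 1" if "n \<ge> 1" for n
      using that by (auto simp: c0_def powr_minus_divide intro!: ge_one_powr_ge_zero)
    have c1_01: "0 \<le> c1 \<and> c1 \<le> 1" using assms(2) by (auto simp: c1_def)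
    have ind_indep: "indep_vars (\<lambda>_. borel) ind UNIV"
    proof -
      define K :: "nat \<Rightarrow> ((nat \<times> nat) + (nat \<times> nat)) set" where "K n = {Inr (0, n), Inr (1, n)}" for n
      have "indep_vars (\<lambda>j. PiM (K j) (\<lambda>_. borel)) (\<lambda>j \<omega>. restrict (\<lambda>i. X i \<omega>) (K j)) UNIV"
        by (rule indep_vars_restrict[OF indep]) (auto simp: K_def I_def disjoint_family_on_def)
      then have "indep_vars (\<lambda>_. borel)
          (\<lambda>j \<omega>. (\<lambda>g. if g (Inr (0, j)) < c0 j \<and> g (Inr (1, j)) < c1 then 1 else 0::real)
                   (restrict (\<lambda>i. X i \<omega>) (K j))) UNIV"
        by (rule indep_vars_compose2) (simp add: K_def)
      moreover have "(\<lambda>j \<omega>. (\<lambda>g. if g (Inr (0, j)) < c0 j \<and> g (Inr (1, j)) < c1 then 1 else 0::real)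
                   (restrict (\<lambda>i. X i \<omega>) (K j))) = ind"
        by (auto simp: K_def ind_def fun_eq_iff)
      ultimately show ?thesis by simp
    qed
    have ind_exp: "expectation (ind n) = c0 n * c1" if n: "n \<ge> 1" for n
    proof -
      define E where "E = {\<omega>\<in>space P. U 0 n \<omega> < c0 n \<and> U 1 n \<omega> < c1}"
      have "expectation (ind n) = expectation (indicator E)"
        by (intro Bochner_Integration.integral_cong) (auto simp: ind_def E_def)
      also have "\<dots> = prob E" by (simp add: E_def Int_absorb2 subsetI)
      also have "prob E = prob {\<omega>\<in>space P. U 0 n \<omega> < c0 n} * prob {\<omega>\<in>space P. U 1 n \<omega> < c1}"
      proof -
        define A where "A i = (if i = Inr (0, n) then {..<c0 n} else {..<c1})" for i :: "(nat \<times> nat) + (nat \<times> nat)"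
        have "prob (\<Inter>i\<in>{Inr (0, n), Inr (1, n)}. X i -` A i \<inter> space P)
            = (\<Prod>i\<in>{Inr (0, n), Inr (1, n)}. prob (X i -` A i \<inter> space P))"
          by (rule indep_varsD[OF indep]) (auto simp: I_def A_def)
        moreover have "(\<Inter>i\<in>{Inr (0, n), Inr (1, n)}. X i -` A i \<inter> space P) = E"
          by (auto simp: A_def E_def)
        moreover have "X (Inr (0, n)) -` A (Inr (0, n)) \<inter> space P = {\<omega>\<in>space P. U 0 n \<omega> < c0 n}"
          by (auto simp: A_def)
        moreover have "X (Inr (1, n)) -` A (Inr (1, n)) \<inter> space P = {\<omega>\<in>space P. U 1 n \<omega> < c1}"
          by (auto simp: A_def)
        ultimately show ?thesis by simp
      qed
      also have "\<dots> = c0 n * c1"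
        using uniform_prob[OF DU[of 0 n]] uniform_prob[OF DU[of 1 n]] c0_01[OF n] c1_01 by simp
      finally show ?thesis .
    qed
    define D where "D t = {\<omega>\<in>space P. (\<Sum>n\<in>{1..t}. ind n \<omega>) \<le> real t powr (2/3) / (2 * real M)}" for t
    have Dm[measurable]: "D t \<in> events" for t unfolding D_def by measurable
    define bnd where "bnd t = exp (-2 * (real t powr (2/3) / (2 * real M))\<^sup>2 / real t)" for t :: nat
    have Dbound: "prob (D t) \<le> bnd t" if t: "t \<ge> 1" for t
    proof -
      define mu where "mu = (\<Sum>n\<in>{1..t}. expectation (ind n))"
      interpret H: Hoeffding_ineq P "{1..t}" ind "\<lambda>_. 0" "\<lambda>_. 1" mu
      proof unfold_locales
        show "indep_vars (\<lambda>_. borel) ind {1..t}"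
          by (rule indep_vars_subset[OF ind_indep]) auto
      qed (auto simp: mu_def ind_def)
      have tpos: "real t > 0" using t by simp
      have low: "c0 n \<ge> real t powr (-1/3)" if "n \<in> {1..t}" for n
        unfolding c0_def using that by (intro powr_mono2') auto
      have "real (card {1..t}) * real t powr (-1/3) \<le> (\<Sum>n\<in>{1..t}. c0 n)"
        by (rule sum_bounded_below) (rule low)
      also have "real (card {1..t}) * real t powr (-1/3) = real t powr (2/3)"
        using tpos by (simp add: powr_mult_base)
      finally have sc0: "real t powr (2/3) \<le> (\<Sum>n\<in>{1..t}. c0 n)" .
      have "mu = (\<Sum>n\<in>{1..t}. c0 n) * c1"
        unfolding mu_def by (simp add: ind_exp sum_distrib_right)
      then have mu_ge: "mu \<ge> real t powr (2/3) / real M"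
        using sc0 c1_01 by (simp add: c1_def divide_right_mono)
      define q where "q = real t powr (2/3) / (2 * real M)"
      have q0: "q \<ge> 0" unfolding q_def by simp
      define eps where "eps = mu - q"
      have eps_ge: "eps \<ge> q" using mu_ge unfolding eps_def q_def by simp
      have "prob {x\<in>space P. (\<Sum>i\<in>{1..t}. ind i x) \<le> mu - eps} \<le> exp (-2 * eps\<^sup>2 / (\<Sum>i\<in>{1..t}. (1 - 0)\<^sup>2))"
        using eps_ge q0 t by (intro H.Hoeffding_ineq_le) auto
      moreover have "{x\<in>space P. (\<Sum>i\<in>{1..t}. ind i x) \<le> mu - eps} = D t"
        unfolding D_def eps_def q_def by simp
      moreover have "exp (-2 * eps\<^sup>2 / (\<Sum>i\<in>{1..t}. (1 - 0)\<^sup>2)) \<le> bnd t"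
      proof -
        have "q\<^sup>2 \<le> eps\<^sup>2" using eps_ge q0 by (intro power_mono) auto
        then have "-2 * eps\<^sup>2 / real t \<le> -2 * q\<^sup>2 / real t" using tpos by (simp add: divide_right_mono)
        then show ?thesis unfolding bnd_def q_def by simp
      qed
      ultimately show ?thesis by simp
    qed
    have "summable bnd"
      unfolding bnd_def using assms(2) by (intro summable_bigo_sq) real_asymp
    then have sD: "summable (\<lambda>t. prob (D t))"
      by (rule summable_comparison_test'[where N=1]) (use Dbound in auto)
    have "AE \<omega> in P. eventually (\<lambda>t. \<omega> \<in> space P - D t) sequentially"
      by (rule borel_cantelli_AE1) (use sD in \<open>auto simp: emeasure_eq_measure\<close>)
    then show ?thesis
    proof (rule AE_mp[OF _ AE_I2[OF impI]])
      fix \<omega> assume \<omega>: "\<omega> \<in> space P" and ev: "eventually (\<lambda>t. \<omega> \<in> space P - D t) sequentially"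
      then obtain t0 where t0: "\<And>t. t \<ge> t0 \<Longrightarrow> \<omega> \<notin> D t" by (auto simp: eventually_sequentially)
      have sum_card: "(\<Sum>n\<in>{1..t}. ind n \<omega>) = real (card {n\<in>{1..t}. explore1 M (\<lambda>j s. U j s \<omega>) n})" for t
        by (simp add: ind_def sum.If_cases explore1_def c0_def c1_def Int_def)
      show "\<exists>t0. \<forall>t\<ge>t0. real (card {n\<in>{1..t}. explore1 M (\<lambda>j s. U j s \<omega>) n}) > real t powr (2/3) / (2 * real M)"
      proof (intro exI allI impI)
        fix t assume "t0 \<le> t"
        then have "\<omega> \<notin> D t" by (rule t0)
        then have "real t powr (2/3) / (2 * real M) < (\<Sum>n\<in>{1..t}. ind n \<omega>)"
          using \<omega> unfolding D_def by auto
        then show "real (card {n\<in>{1..t}. explore1 M (\<lambda>j s. U j s \<omega>) n}) > real t powr (2/3) / (2 * real M)"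
          using sum_card[of t] by linarith
      qed
    qed
  qed

  show ?thesis using G3 G4 G5
  proof eventually_elim
    case (elim \<omega>)
    show ?case by (rule final_det[OF assms(2) assms(3) elim])
  qed
qed


end
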